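(* Let $K$ be a field with an absolute value $v$, and let $\mathbb{C}_v$ denote the completion of an algebraic closure of $K$. Let $\phi(z)\in K[z]$ be a polynomial of degree $d\geq 2$ with associated local canonical height $\hat{\lambda}_{v,\phi}$. Let $\gamma\in\mathbb{C}_v^{\times}$ and define $\psi(z)=\gamma\,\phi(\gamma^{-1}z)\in\mathbb{C}_v[z]$. Write $\psi(z)=b_d z^d+\cdots+b_0=b_d(z-\beta_1)\cdots(z-\beta_d)$ with $b_d\neq 0$, $\beta_i\in\mathbb{C}_v$, let $A=\max_i|\beta_i|_v$, $B=|b_d|_v^{-1/d}$, and let $c_v=\max\{1,A,B\}$, $C_v=\max\{1,|b_0|_v,\ldots,|b_d|_v\}$ if $v$ is non-archimedean, and $c_v=\max\{1,A+B\}$, $C_v=\max\{1,|b_0|_v+\cdots+|b_d|_v\}$ if $v$ is archimedean. Then for all $x\in\mathbb{C}_v$, $$\frac{-d\log c_v}{d-1}\leq \hat{\lambda}_{v,\phi}(x)-\lambda_v(\gamma x)\leq\frac{\log C_v}{d-1}.$$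
   Context: The standard local height is $\lambda_v(x)=\log\max\{1,|x|_v\}$ for $x\in\mathbb{C}_v$. For a polynomial $f$ with coefficients in $\mathbb{C}_v$ of degree $d\geq 2$, the local canonical height is $\hat{\lambda}_{v,f}(x)=\lim_{n\to\infty}d^{-n}\lambda_v(f^n(x))$ (this limit exists), where $f^n$ is the $n$-th iterate of $f$. *)

theory Defs
  imports "HOL-Computational_Algebra.Polynomial" Complex_Main
begin

definition abs_value :: "('a::field \<Rightarrow> real) \<Rightarrow> bool" where
  "abs_value v \<longleftrightarrow> (\<forall>x. 0 \<le> v x) \<and> (\<forall>x. v x = 0 \<longleftrightarrow> x = 0)
     \<and> (\<forall>x y. v (x * y) = v x * v y) \<and> (\<forall>x y. v (x + y) \<le> v x + v y)"

definition non_archimedean :: "('a::field \<Rightarrow> real) \<Rightarrow> bool" where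
  "non_archimedean v \<longleftrightarrow> (\<forall>x y. v (x + y) \<le> max (v x) (v y))"

definition alg_closed_field :: "'a::field itself \<Rightarrow> bool" where
  "alg_closed_field _ \<longleftrightarrow> (\<forall>p::'a poly. 0 < degree p \<longrightarrow> (\<exists>x. poly p x = 0))"

definition v_complete :: "('a::field \<Rightarrow> real) \<Rightarrow> bool" where
  "v_complete v \<longleftrightarrow> (\<forall>s::nat \<Rightarrow> 'a.
      (\<forall>e>0. \<exists>N. \<forall>m\<ge>N. \<forall>n\<ge>N. v (s m - s n) < e) \<longrightarrow>
      (\<exists>L. \<forall>e>0. \<exists>N. \<forall>n\<ge>N. v (s n - L) < e))"

definition is_subfield :: "'a::field set \<Rightarrow> bool" where
  "is_subfield K \<longleftrightarrow> 0 \<in> K \<and> 1 \<in> K \<and> (\<forall>x\<in>K. \<forall>y\<in>K. x + y \<in> K \<and> x - y \<in> K \<and> x * y \<in> K)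
     \<and> (\<forall>x\<in>K. inverse x \<in> K)"

definition algebraic_over :: "'a::field set \<Rightarrow> 'a \<Rightarrow> bool" where
  "algebraic_over K x \<longleftrightarrow> (\<exists>p. p \<noteq> 0 \<and> (\<forall>i. coeff p i \<in> K) \<and> poly p x = 0)"

text \<open>C is (isomorphic to) the completion of an algebraic closure of K:
  a complete algebraically closed valued field in which the elements algebraic over K are dense.\<close>
definition completion_of_alg_closure :: "'a::field set \<Rightarrow> ('a \<Rightarrow> real) \<Rightarrow> bool" where
  "completion_of_alg_closure K v \<longleftrightarrow> is_subfield K \<and> abs_value v \<and> alg_closed_field TYPE('a)
     \<and> v_complete v \<and> (\<forall>x. \<forall>e>0. \<exists>y. algebraic_over K y \<and> v (x - y) < e)"

definition loc_height :: "('a \<Rightarrow> real) \<Rightarrow> 'a \<Rightarrow> real" where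
  "loc_height v x = ln (max 1 (v x))"

definition canon_height :: "('a::comm_ring \<Rightarrow> real) \<Rightarrow> 'a poly \<Rightarrow> 'a \<Rightarrow> real" where
  "canon_height v f x = lim (\<lambda>n. loc_height v ((poly f ^^ n) x) / real (degree f) ^ n)"

end

theory Submission imports Defs begin

lemma av:
  assumes "abs_value v"
  shows av0: "v 0 = 0" and av1: "v 1 = 1" and avm: "v (x*y) = v x * v y"
    and avt: "v (x+y) \<le> v x + v y" and avn: "v (-x) = v x"
    and avd: "v x - v y \<le> v (x - y)" and avi: "v (inverse x) = inverse (v x)"
    and avp: "v (x^n) = v x ^ n" and avnn: "0 \<le> v x"
proof -
  note A = assms[unfolded abs_value_def]
  show 0: "v 0 = 0" using A by auto
  have "v 1 = v 1 * v 1" using A by (metis mult_1)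
  moreover have "v 1 \<noteq> 0" using A by auto
  ultimately show 1: "v 1 = 1" by (metis mult_cancel_left1)
  show m: "v (x*y) = v x * v y" for x y using A by auto
  show "v (x+y) \<le> v x + v y" using A by auto
  have "v (-1) * v (-1) = 1" using m[of "-1" "-1"] 1 by simp
  moreover have "v (-1) \<ge> 0" using A by auto
  ultimately have "v (-1) = 1"
    by (metis abs_of_nonneg abs_square_eq_1 less_eq_real_def mult_cancel_left2 power2_eq_square)
  then show "v (-x) = v x" using m[of "-1" x] by simp
  have "v x \<le> v (x - y) + v y" using A by (metis diff_add_cancel)
  then show "v x - v y \<le> v (x - y)" by simp
  show "v (inverse x) = inverse (v x)"
  proof (cases "x = 0")
    case True then show ?thesis using 0 by simp
  next
    case False
    then have "v x * v (inverse x) = 1" using m[of x "inverse x"] 1 by simp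
    then show ?thesis by (metis inverse_unique)
  qed
  show "v (x^n) = v x ^ n" by (induction n) (auto simp: 1 m)
  show "0 \<le> v x" using A by auto
qed

lemma av_prod: "abs_value v \<Longrightarrow> v (prod f S) = prod (\<lambda>i. v (f i)) S"
  by (induction S rule: infinite_finite_induct) (auto simp: av1 avm)

lemma av_sum: "abs_value v \<Longrightarrow> v (sum f S) \<le> sum (\<lambda>i. v (f i)) S"
proof (induction S rule: infinite_finite_induct)
  case (insert x F)
  then show ?case using avt[OF insert(4), of "f x" "sum f F"] by simp
qed (auto simp: av0)

lemma av_sum_na: "abs_value v \<Longrightarrow> non_archimedean v \<Longrightarrow> (\<forall>i\<in>S. v (f i) \<le> M) \<Longrightarrow> 0 \<le> M
   \<Longrightarrow> v (sum f S) \<le> M"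
proof (induction S rule: infinite_finite_induct)
  case (insert x F)
  then have "v (sum f (insert x F)) \<le> max (v (f x)) (v (sum f F))"
    unfolding non_archimedean_def by simp
  then show ?case using insert by (simp add: max_def split: if_splits)
qed (auto simp: av0)

lemma iter_bound:
  fixes g :: "'a \<Rightarrow> 'a" and h :: "'a \<Rightarrow> real" and d a b :: real
  assumes d: "d > 1" and lo: "\<And>y. d * h y - a \<le> h (g y)" and up: "\<And>y. h (g y) \<le> d * h y + b"
  shows "\<exists>L. (\<lambda>n. h ((g^^n) y) / d^n) \<longlonglongrightarrow> L \<and> - a / (d - 1) \<le> L - h y \<and> L - h y \<le> b / (d - 1)"
proof -
  define e where "e k = (h ((g^^Suc k) y) - d * h ((g^^k) y)) / d^Suc k" for k
  have tel: "h ((g^^n) y) / d^n = h y + (\<Sum>k<n. e k)" for n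
  proof (induction n)
    case (Suc n)
    have "h ((g^^Suc n) y) / d^Suc n = h ((g^^n) y) / d^n + e n"
      using d unfolding e_def by (simp add: field_simps)
    then show ?case using Suc by simp
  qed simp
  have eb: "- a / d^Suc k \<le> e k \<and> e k \<le> b / d^Suc k" for k
  proof -
    have "-a \<le> h ((g^^Suc k) y) - d * h ((g^^k) y)" "h ((g^^Suc k) y) - d * h ((g^^k) y) \<le> b"
      using lo[of "(g^^k) y"] up[of "(g^^k) y"] by auto
    moreover have p: "d^Suc k > 0" using d by simp
    ultimately show ?thesis unfolding e_def
      using divide_right_mono[OF _ less_imp_le[OF p]] by (metis minus_divide_left)
  qed
  have geo: "(\<lambda>k. 1 / d^Suc k) sums (1 / (d - 1))"
  proof -
    have "(\<lambda>k. (1/d)^k) sums (1 / (1 - 1/d))" using d by (intro geometric_sums) simp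
    then have "(\<lambda>k. 1/d * (1/d)^k) sums (1/d * (1 / (1 - 1/d)))" by (rule sums_mult)
    moreover have "1/d * (1 / (1 - 1/d)) = 1 / (d - 1)" using d by (simp add: field_simps)
    moreover have "(\<lambda>k. 1/d * (1/d)^k) = (\<lambda>k. 1 / d^Suc k)" by (simp add: power_divide)
    ultimately show ?thesis by simp
  qed
  have geoc: "(\<lambda>k. c / d^Suc k) sums (c / (d - 1))" for c
    using sums_mult[OF geo, of c] by simp
  have sm: "summable e"
  proof (rule summable_comparison_test)
    show "summable (\<lambda>k. max \<bar>a\<bar> \<bar>b\<bar> / d^Suc k)" using geoc sums_summable by blast
    show "\<exists>N. \<forall>n\<ge>N. norm (e n) \<le> max \<bar>a\<bar> \<bar>b\<bar> / d^Suc n"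
    proof (intro exI allI impI)
      fix n
      have p: "d^Suc n > 0" using d by simp
      have "-a / d^Suc n \<ge> - max \<bar>a\<bar> \<bar>b\<bar> / d^Suc n" "b / d^Suc n \<le> max \<bar>a\<bar> \<bar>b\<bar> / d^Suc n"
        using p by (auto intro!: divide_right_mono)
      then show "norm (e n) \<le> max \<bar>a\<bar> \<bar>b\<bar> / d^Suc n" using eb[of n]
        unfolding real_norm_def abs_le_iff by linarith
    qed
  qed
  have "(\<lambda>n. h y + (\<Sum>k<n. e k)) \<longlonglongrightarrow> h y + suminf e"
    by (intro tendsto_add tendsto_const summable_LIMSEQ sm)
  moreover have "-a/(d-1) \<le> suminf e" using sums_le[OF _ geoc[of "-a"] summable_sums[OF sm]] eb by auto
  moreover have "suminf e \<le> b/(d-1)" using sums_le[OF _ summable_sums[OF sm] geoc[of "b"]] eb by auto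
  ultimately show ?thesis unfolding tel by (intro exI[of _ "h y + suminf e"]) auto
qed


lemma inf_alg_closed:
  assumes "alg_closed_field TYPE('a::field)" shows "infinite (UNIV::'a set)"
proof
  assume fin: "finite (UNIV::'a set)"
  define q :: "'a poly" where "q = (\<Prod>a\<in>UNIV. [:-a,1:])"
  have dq: "degree q = card (UNIV::'a set)" unfolding q_def
    by (subst degree_prod_eq_sum_degree) auto
  have "card (UNIV::'a set) > 0" using fin by (simp add: card_gt_0_iff)
  then have "degree (q + 1) = degree q" using dq by (intro degree_add_eq_left) simp
  then have "0 < degree (q + 1)" using dq \<open>card _ > 0\<close> by simp
  then obtain x where "poly (q + 1) x = 0" using assms unfolding alg_closed_field_def by blast
  moreover have "poly q x = 0" unfolding q_def poly_prod
  proof (rule prod_zero)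
    show "finite (UNIV::'a set)" by (rule fin)
    show "\<exists>a\<in>UNIV. poly [:- a, 1:] x = 0" by (intro bexI[of _ x]) simp_all
  qed
  ultimately show False by simp
qed

lemma ln_max_scale:
  fixes a t :: real assumes "a > 0" "t \<ge> 0"
  shows "\<bar>ln (max 1 (a * t)) - ln (max 1 t)\<bar> \<le> ln (max 1 a) + ln (max 1 (1/a))"
proof -
  have 1: "max 1 (a*t) \<le> max 1 a * max 1 t" using assms
    by (smt (verit) max.cobounded1 max.cobounded2 mult_le_cancel_left1 mult_mono mult_nonneg_nonneg)
  have 2: "max 1 t \<le> max 1 (1/a) * max 1 (a*t)"
  proof -
    have "t = (1/a) * (a*t)" using assms by simp
    then show ?thesis using assms
      by (smt (verit) max.cobounded1 max.cobounded2 mult_le_cancel_left1 mult_mono mult_nonneg_nonneg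
          zero_le_divide_1_iff)
  qed
  have "ln (max 1 a) + ln (max 1 t) = ln (max 1 a * max 1 t)" by (simp add: ln_mult)
  moreover have "ln (max 1 (a*t)) \<le> ln (max 1 a * max 1 t)" using 1 by simp
  ultimately have "ln (max 1 (a*t)) \<le> ln (max 1 a) + ln (max 1 t)" by simp
  moreover have "ln (max 1 t) \<le> ln (max 1 (1/a)) + ln (max 1 (a*t))"
  proof -
    have "ln (max 1 (1/a)) + ln (max 1 (a*t)) = ln (max 1 (1/a) * max 1 (a*t))" by (simp add: ln_mult)
    moreover have "ln (max 1 t) \<le> ln (max 1 (1/a) * max 1 (a*t))" using 2 by simp
    ultimately show ?thesis by simp
  qed
  moreover have "ln (max 1 a) \<ge> 0" "ln (max 1 (1/a)) \<ge> 0" by auto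
  ultimately show ?thesis by linarith
qed


theorem corollary2p6:
  fixes K :: "'a::field set" and v :: "'a \<Rightarrow> real"
    and \<phi> \<psi> :: "'a poly" and \<gamma> :: 'a and \<beta> :: "nat \<Rightarrow> 'a" and d :: nat
  assumes "completion_of_alg_closure K v"
    and "\<forall>i. coeff \<phi> i \<in> K"
    and "degree \<phi> = d" and "d \<ge> 2"
    and "\<gamma> \<noteq> 0"
    and "\<forall>z. poly \<psi> z = \<gamma> * poly \<phi> (inverse \<gamma> * z)"
    and "\<psi> = smult (coeff \<psi> d) (\<Prod>i<d. [:- \<beta> i, 1:])"
  shows "let A = Max ((\<lambda>i. v (\<beta> i)) ` {..<d});
             B = v (coeff \<psi> d) powr (- 1 / real d);
             c = (if non_archimedean v then max 1 (max A B) else max 1 (A + B));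
             C = (if non_archimedean v then max 1 (Max ((\<lambda>i. v (coeff \<psi> i)) ` {..d}))
                  else max 1 (\<Sum>i\<le>d. v (coeff \<psi> i)))
         in \<forall>x. - real d * ln c / (real d - 1) \<le> canon_height v \<phi> x - loc_height v (\<gamma> * x)
              \<and> canon_height v \<phi> x - loc_height v (\<gamma> * x) \<le> ln C / (real d - 1)"
proof -
  have av: "abs_value v" and ac: "alg_closed_field TYPE('a)"
    using assms(1) unfolding completion_of_alg_closure_def by simp_all
  define A where "A = Max ((\<lambda>i. v (\<beta> i)) ` {..<d})"
  define B where "B = v (coeff \<psi> d) powr (- 1 / real d)"
  define c where "c = (if non_archimedean v then max 1 (max A B) else max 1 (A + B))"
  define C where "C = (if non_archimedean v then max 1 (Max ((\<lambda>i. v (coeff \<psi> i)) ` {..d}))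
                  else max 1 (\<Sum>i\<le>d. v (coeff \<psi> i)))"
  have d2: "d \<ge> 2" by (rule assms(4))
  have phi0: "\<phi> \<noteq> 0" using assms(3,4) by auto
  have psi_phi: "poly \<psi> (\<gamma>*y) = \<gamma> * poly \<phi> y" for y
    using assms(6) assms(5) by (simp add: mult.assoc[symmetric])
  have bd0: "coeff \<psi> d \<noteq> 0"
  proof
    assume "coeff \<psi> d = 0"
    then have "\<psi> = 0" using assms(7) by simp
    then have "poly \<phi> y = 0" for y using psi_phi[of y] assms(5) by simp
    then have "{x. poly \<phi> x = 0} = UNIV" by auto
    with poly_roots_finite[OF phi0] inf_alg_closed[OF ac] show False by simp
  qed
  have pfac: "poly \<psi> y = coeff \<psi> d * (\<Prod>i<d. (y - \<beta> i))" for y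
  proof -
    from assms(7) have "poly \<psi> y = poly (smult (coeff \<psi> d) (\<Prod>i<d. [:- \<beta> i, 1:])) y"
      by (rule arg_cong[where f="\<lambda>p. poly p y"])
    then show ?thesis by (simp add: poly_prod)
  qed
  have degpsi: "degree \<psi> \<le> d"
  proof -
    have "degree (\<Prod>i<d. [:- \<beta> i, 1:]) \<le> d"
      using degree_prod_sum_le[of "{..<d}" "\<lambda>i. [:- \<beta> i, 1:]"] by simp
    then show ?thesis using assms(7) degree_smult_le by (metis order_trans)
  qed
  have psum: "poly \<psi> y = (\<Sum>i\<le>d. coeff \<psi> i * y^i)" for y
    unfolding poly_altdef
    by (rule sum.mono_neutral_left) (auto simp: degpsi coeff_eq_0)
  have vbd: "v (coeff \<psi> d) > 0" using av bd0 unfolding abs_value_def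
    by (metis less_eq_real_def)
  have Bpos: "B > 0" unfolding B_def using vbd by simp
  have BdInv: "v (coeff \<psi> d) * B^d = 1"
  proof -
    have "B^d = B powr real d" using Bpos by (simp add: powr_realpow)
    also have "\<dots> = v (coeff \<psi> d) powr (-1)" unfolding B_def powr_powr using d2 by simp
    also have "\<dots> = 1 / v (coeff \<psi> d)" using vbd by (simp add: powr_neg_one)
    finally show ?thesis using vbd by simp
  qed
  have betaA: "v (\<beta> i) \<le> A" if "i < d" for i unfolding A_def
    using that by (intro Max_ge) auto
  have A0: "A \<ge> 0" using betaA[of 0] avnn[OF av, of "\<beta> 0"] d2 by linarith
  have c1: "c \<ge> 1" "c \<ge> A" "c \<ge> B" unfolding c_def using A0 Bpos by auto
  have cAB: "\<not> non_archimedean v \<Longrightarrow> c \<ge> A + B" unfolding c_def by auto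
  have C1: "C \<ge> 1" unfolding C_def by auto
  have up: "ln (max 1 (v (poly \<psi> y))) \<le> real d * ln (max 1 (v y)) + ln C" for y
  proof -
    define m where "m = max 1 (v y)"
    have m1: "m \<ge> 1" unfolding m_def by simp
    have vyi: "v y ^ i \<le> m^d" if "i \<le> d" for i
    proof -
      have "v y ^ i \<le> m ^ i" unfolding m_def by (intro power_mono) (auto simp: avnn[OF av])
      also have "\<dots> \<le> m ^ d" using m1 that by (intro power_increasing) auto
      finally show ?thesis .
    qed
    have trm: "v (coeff \<psi> i * y^i) \<le> v (coeff \<psi> i) * m^d" if "i \<le> d" for i
      unfolding avm[OF av] avp[OF av] using vyi[OF that] avnn[OF av]
      by (intro mult_left_mono) auto
    have md: "m^d \<ge> 1" using m1 by (simp add: one_le_power)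
    have vC: "v (poly \<psi> y) \<le> C * m^d"
    proof (cases "non_archimedean v")
      case True
      define M where "M = Max ((\<lambda>i. v (coeff \<psi> i)) ` {..d})"
      have "v (coeff \<psi> i * y^i) \<le> M * m^d" if "i \<in> {..d}" for i
      proof -
        have "v (coeff \<psi> i) \<le> M" unfolding M_def using that by (intro Max_ge) auto
        moreover have "v (coeff \<psi> i) * m^d \<le> M * m^d" using md \<open>v (coeff \<psi> i) \<le> M\<close>
          by (intro mult_right_mono) auto
        ultimately show ?thesis using trm[of i] that by auto
      qed
      moreover have "M \<ge> 0" unfolding M_def using avnn[OF av, of "coeff \<psi> 0"]
        by (meson Max_ge atMost_iff finite_atMost finite_imageI image_eqI le0 order_trans)
      ultimately have "v (poly \<psi> y) \<le> M * m^d" unfolding psum using md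
        by (intro av_sum_na[OF av True]) auto
      moreover have MC: "M \<le> C" unfolding C_def M_def using True by simp
      moreover have "M * m^d \<le> C * m^d" using md MC by (intro mult_right_mono) auto
      ultimately show ?thesis by linarith
    next
      case False
      have "v (poly \<psi> y) \<le> (\<Sum>i\<le>d. v (coeff \<psi> i * y^i))" unfolding psum by (rule av_sum[OF av])
      also have "\<dots> \<le> (\<Sum>i\<le>d. v (coeff \<psi> i) * m^d)" by (intro sum_mono trm) auto
      also have "\<dots> = (\<Sum>i\<le>d. v (coeff \<psi> i)) * m^d" by (simp add: sum_distrib_right)
      also have "\<dots> \<le> C * m^d" unfolding C_def using False md by (intro mult_right_mono) auto
      finally show ?thesis .
    qed
    have "max 1 (v (poly \<psi> y)) \<le> C * m^d" using vC C1 md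
      by (metis max.bounded_iff mult_mono' mult_1 zero_le_one)
    then have "ln (max 1 (v (poly \<psi> y))) \<le> ln (C * m^d)" by simp
    also have "\<dots> = ln C + real d * ln m" using C1 m1 by (simp add: ln_mult ln_realpow)
    finally show ?thesis unfolding m_def by simp
  qed
  have low: "real d * ln (max 1 (v y)) - real d * ln c \<le> ln (max 1 (v (poly \<psi> y)))" for y
  proof -
    define m where "m = max 1 (v y)"
    have key: "m^d \<le> c^d * max 1 (v (poly \<psi> y))"
    proof (cases "v y \<le> c")
      case True
      then have "m \<le> c" unfolding m_def using c1 by simp
      then have "m^d \<le> c^d" unfolding m_def by (intro power_mono) auto
      also have "\<dots> \<le> c^d * max 1 (v (poly \<psi> y))" using c1 by simp
      finally show ?thesis .
    next
      case False
      then have vyc: "v y > c" by simp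
      define t where "t = (if non_archimedean v then v y else v y - A)"
      have t0: "t \<ge> 0" unfolding t_def using vyc c1 cAB Bpos avnn[OF av, of y] by auto
      have tle: "t \<le> v (y - \<beta> i)" if "i < d" for i
      proof (cases "non_archimedean v")
        case True
        have "v ((y - \<beta> i) + \<beta> i) \<le> max (v (y - \<beta> i)) (v (\<beta> i))"
          using True unfolding non_archimedean_def by blast
        then show ?thesis unfolding t_def using True betaA[OF that] vyc c1 by auto
      next
        case False
        then show ?thesis unfolding t_def using avd[OF av, of y "\<beta> i"] betaA[OF that] by auto
      qed
      have ct: "B * v y \<le> c * t"
      proof (cases "non_archimedean v")
        case True
        then show ?thesis unfolding t_def using c1 avnn[OF av, of y] by (simp add: mult_right_mono)
      next
        case False
        have "0 \<le> (c - B - A) * v y" using cAB[OF False] avnn[OF av, of y] by simp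
        moreover have "0 \<le> A * (v y - c)" using A0 vyc by simp
        ultimately show ?thesis unfolding t_def using False by (simp add: algebra_simps)
      qed
      have "t^d \<le> (\<Prod>i<d. v (y - \<beta> i))"
      proof -
        have "(\<Prod>i<d. t) \<le> (\<Prod>i<d. v (y - \<beta> i))" using t0 tle by (intro prod_mono) auto
        then show ?thesis by simp
      qed
      then have vps: "v (coeff \<psi> d) * t^d \<le> v (poly \<psi> y)"
        unfolding pfac avm[OF av] av_prod[OF av] using vbd by (simp add: mult_left_mono)
      have "m^d = v (coeff \<psi> d) * (B * v y)^d" unfolding m_def using vyc c1 BdInv
        by (simp add: power_mult_distrib mult.assoc[symmetric])
      also have "\<dots> \<le> v (coeff \<psi> d) * (c * t)^d" using ct vbd Bpos avnn[OF av, of y]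
        by (intro mult_left_mono power_mono) auto
      also have "\<dots> = c^d * (v (coeff \<psi> d) * t^d)" by (simp add: power_mult_distrib)
      also have "\<dots> \<le> c^d * max 1 (v (poly \<psi> y))" using vps c1
        by (intro mult_left_mono) auto
      finally show ?thesis .
    qed
    have m1: "m \<ge> 1" unfolding m_def by simp
    have "real d * ln m = ln (m^d)" using m1 by (simp add: ln_realpow)
    also have "\<dots> \<le> ln (c^d * max 1 (v (poly \<psi> y)))" 
    proof -
      have "0 < m^d" using m1 by simp
      moreover have "0 < c^d * max 1 (v (poly \<psi> y))" using c1 by simp
      ultimately show ?thesis using key by simp
    qed
    also have "\<dots> = real d * ln c + ln (max 1 (v (poly \<psi> y)))" using c1
      by (simp add: ln_mult ln_realpow)
    finally show ?thesis unfolding m_def by simp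
  qed
  have main: "\<forall>x. - real d * ln c / (real d - 1) \<le> canon_height v \<phi> x - loc_height v (\<gamma> * x)
              \<and> canon_height v \<phi> x - loc_height v (\<gamma> * x) \<le> ln C / (real d - 1)"
  proof
    fix x
    define h where "h y = loc_height v (\<gamma> * y)" for y
    have rd: "real d > 1" using d2 by simp
    obtain L where L: "(\<lambda>n. h ((poly \<phi> ^^ n) x) / real d ^ n) \<longlonglongrightarrow> L"
      "- (real d * ln c) / (real d - 1) \<le> L - h x" "L - h x \<le> ln C / (real d - 1)"
    proof -
      have "\<exists>L. (\<lambda>n. h ((poly \<phi> ^^ n) x) / real d ^ n) \<longlonglongrightarrow> L \<and>
          - (real d * ln c) / (real d - 1) \<le> L - h x \<and> L - h x \<le> ln C / (real d - 1)"
      proof (rule iter_bound[OF rd])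
        show "real d * h y - real d * ln c \<le> h (poly \<phi> y)" for y
          unfolding h_def loc_height_def psi_phi[symmetric] using low[of "\<gamma>*y"] by simp
        show "h (poly \<phi> y) \<le> real d * h y + ln C" for y
          unfolding h_def loc_height_def psi_phi[symmetric] using up[of "\<gamma>*y"] by simp
      qed
      then show ?thesis using that by blast
    qed
    define K where "K = ln (max 1 (v \<gamma>)) + ln (max 1 (1 / v \<gamma>))"
    have vg: "v \<gamma> > 0" using av assms(5) unfolding abs_value_def by (metis less_eq_real_def)
    have diff: "\<bar>loc_height v w - h w\<bar> \<le> K" for w
      using ln_max_scale[OF vg avnn[OF av, of w]] unfolding h_def loc_height_def K_def avm[OF av]
      by linarith
    have z: "(\<lambda>n. loc_height v ((poly \<phi> ^^ n) x) / real d ^ n - h ((poly \<phi> ^^ n) x) / real d ^ n)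
        \<longlonglongrightarrow> 0"
    proof (rule tendsto_0_le[where K=1])
      have K0: "K \<ge> 0" unfolding K_def by simp
      show "\<forall>\<^sub>F n in sequentially. norm (loc_height v ((poly \<phi> ^^ n) x) / real d ^ n
          - h ((poly \<phi> ^^ n) x) / real d ^ n) \<le> norm (K * inverse (real d ^ n)) * 1"
      proof (intro always_eventually allI)
        fix n
        have p: "real d ^ n > 0" using rd by simp
        have "norm (loc_height v ((poly \<phi> ^^ n) x) / real d ^ n - h ((poly \<phi> ^^ n) x) / real d ^ n)
            = \<bar>loc_height v ((poly \<phi> ^^ n) x) - h ((poly \<phi> ^^ n) x)\<bar> / real d ^ n"
          using p by (simp add: diff_divide_distrib[symmetric])
        also have "\<dots> \<le> K / real d ^ n" using diff p by (intro divide_right_mono) auto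
        finally show "norm (loc_height v ((poly \<phi> ^^ n) x) / real d ^ n
          - h ((poly \<phi> ^^ n) x) / real d ^ n) \<le> norm (K * inverse (real d ^ n)) * 1" using K0 p by (simp add: field_simps)
      qed
      show "(\<lambda>n. K * inverse (real d ^ n)) \<longlonglongrightarrow> 0"
        using tendsto_mult[OF tendsto_const LIMSEQ_inverse_realpow_zero[OF rd], of K] by simp
    qed
    have "(\<lambda>n. loc_height v ((poly \<phi> ^^ n) x) / real d ^ n) \<longlonglongrightarrow> L + 0"
      using tendsto_add[OF L(1) z] by simp
    then have "canon_height v \<phi> x = L" unfolding canon_height_def assms(3) by (simp add: limI)
    then show "- real d * ln c / (real d - 1) \<le> canon_height v \<phi> x - loc_height v (\<gamma> * x)
              \<and> canon_height v \<phi> x - loc_height v (\<gamma> * x) \<le> ln C / (real d - 1)"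
      using L(2,3) unfolding h_def by simp
  qed
  show ?thesis unfolding Let_def
    by (rule main[unfolded A_def B_def c_def C_def])
qed

end
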